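(* Let $L\geq2$ be an even integer, $P\geq0$, $p_B\in[0,1]$. Let $\beta_1,\ldots,\beta_L$ be i.i.d. with $\mathbb{P}(\beta_l=0)=p_B$, $\mathbb{P}(\beta_l=1)=1-p_B$; $\theta_1,\ldots,\theta_L$ i.i.d. $\mathrm{Uniform}(0,2\pi)$; $\{\phi_{l,k}\}_{l\in\{1,\ldots,L\},k\geq1}$ i.i.d. $\mathrm{Uniform}(0,2\pi)$; all mutually independent. Define $$\mathbf{h}[k]:=\begin{bmatrix}\sum_{l=1}^{L/2}\beta_le^{j(\theta_l+\phi_{l,k})}\\ \sum_{l=L/2+1}^{L}\beta_le^{j(\theta_l+\phi_{l,k})}\end{bmatrix},\qquad (\alpha_1,\alpha_2):=\Big(\sum_{l=1}^{L/2}\beta_l,\ \sum_{l=L/2+1}^{L}\beta_l\Big),$$ and for $(i_1,i_2)\in\{0,\ldots,L/2\}^2$ $$\bar R(i_1,i_2):=\mathbb{E}\Big[\log\Big(1+\Big|\textstyle\sum_{l=1}^{i_1}e^{j\vartheta_l}\Big|^2P+\Big|\textstyle\sum_{l=L/2+1}^{L/2+i_2}e^{j\vartheta_l}\Big|^2P\Big)\Big],$$ where $\vartheta_1,\ldots,\vartheta_L$ are i.i.d. $\mathrm{Uniform}(0,2\pi)$. Then for every $\epsilon>0$, $$\lim_{K\to\infty}\mathbb{P}\Big(\Big|\frac1K\sum_{k=1}^K\log(1+\|\mathbf{h}[k]\|^2P)-\bar R(\alpha_1,\alpha_2)\Big|\geq\epsilon\Big)=0.$$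
   Context: This concerns non-coherent joint Alamouti space-time coding with phase diversity: the transmitters are split into two groups of $L/2$, each group playing the role of one Alamouti antenna, and each transmitter additionally applies per-symbol random phases $\phi_{l,k}$. $\log$ is the logarithm in a fixed base; $\|\cdot\|$ is the Euclidean norm. *)

theory Defs
  imports "HOL-Probability.Probability"
begin

definition unif2pi :: "real measure" where
  "unif2pi = uniform_measure lborel {0<..<2*pi}"

text \<open>Index type tagging the mutually independent random variables:
  beta_l, theta_l and phi_{l,k}.\<close>
datatype rv_idx = Beta nat | Theta nat | Phi nat nat

definition Rbar :: "real \<Rightarrow> nat \<Rightarrow> real \<Rightarrow> nat \<Rightarrow> nat \<Rightarrow> real" where
  "Rbar b L P i1 i2 =
     (\<integral>v. log b (1 + (cmod (\<Sum>l=1..i1. cis (v l)))\<^sup>2 * P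
                     + (cmod (\<Sum>l=L div 2 + 1..L div 2 + i2. cis (v l)))\<^sup>2 * P)
      \<partial>(PiM {1..L} (\<lambda>_. unif2pi)))"

definition h1 :: "nat \<Rightarrow> (nat \<Rightarrow> 'a \<Rightarrow> real) \<Rightarrow> (nat \<Rightarrow> 'a \<Rightarrow> real)
                   \<Rightarrow> (nat \<Rightarrow> nat \<Rightarrow> 'a \<Rightarrow> real) \<Rightarrow> nat \<Rightarrow> 'a \<Rightarrow> complex" where
  "h1 L beta theta phi k x =
     (\<Sum>l=1..L div 2. complex_of_real (beta l x) * cis (theta l x + phi l k x))"

definition h2 :: "nat \<Rightarrow> (nat \<Rightarrow> 'a \<Rightarrow> real) \<Rightarrow> (nat \<Rightarrow> 'a \<Rightarrow> real)
                   \<Rightarrow> (nat \<Rightarrow> nat \<Rightarrow> 'a \<Rightarrow> real) \<Rightarrow> nat \<Rightarrow> 'a \<Rightarrow> complex" where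
  "h2 L beta theta phi k x =
     (\<Sum>l=L div 2 + 1..L. complex_of_real (beta l x) * cis (theta l x + phi l k x))"

end

theory Submission
  imports Defs
begin

lemma sets_unif2pi[simp, measurable_cong]: "sets unif2pi = sets borel"
  by (simp add: unif2pi_def)

lemma space_unif2pi[simp]: "space unif2pi = UNIV"
  by (simp add: unif2pi_def)

lemma prob_space_unif2pi: "prob_space unif2pi"
  unfolding unif2pi_def by (rule prob_space_uniform_measure) auto

lemma emeasure_lborel_translate:
  fixes a :: real
  assumes "B \<in> sets borel"
  shows "emeasure lborel ((\<lambda>x. x + a) -` B) = emeasure lborel B"
proof -
  have "emeasure lborel B = emeasure (distr lborel borel ((+) a)) B"
    by (simp add: lborel_distr_plus)
  also have "\<dots> = emeasure lborel ((+) a -` B \<inter> space lborel)"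
    using assms by (subst emeasure_distr) auto
  moreover have "(\<lambda>x. x + a) = (+) a" by (auto simp: fun_eq_iff)
  ultimately show ?thesis by simp
qed

lemma unif2pi_shift:
  fixes c :: real
  assumes c: "0 \<le> c" "c < 2*pi"
  defines "s \<equiv> (\<lambda>x::real. if c + x < 2*pi then c + x else c + x - 2*pi)"
  shows "s \<in> borel_measurable borel" "distr unif2pi borel s = unif2pi"
proof -
  show sm: "s \<in> borel_measurable borel" unfolding s_def by measurable
  show "distr unif2pi borel s = unif2pi"
  proof (rule measure_eqI)
    fix B assume "B \<in> sets (distr unif2pi borel s)"
    then have B[measurable]: "B \<in> sets borel" by simp
    have eq: "s -` B \<inter> {0<..<2*pi} = (\<lambda>x. x + c) -` (B \<inter> {c<..<2*pi}) \<union> (\<lambda>x. x + (c - 2*pi)) -` (B \<inter> {0..<c})"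
      using c by (auto simp: s_def algebra_simps split: if_splits)
    have "emeasure lborel (s -` B \<inter> {0<..<2*pi}) =
       emeasure lborel ((\<lambda>x. x + c) -` (B \<inter> {c<..<2*pi})) + emeasure lborel ((\<lambda>x. x + (c - 2*pi)) -` (B \<inter> {0..<c}))"
      unfolding eq using c
      by (intro plus_emeasure[symmetric]) (auto)
    also have "\<dots> = emeasure lborel (B \<inter> {c<..<2*pi}) + emeasure lborel (B \<inter> {0..<c})"
      by (simp only: emeasure_lborel_translate sets.Int sets_lborel atLeastLessThan_borel greaterThanLessThan_borel B)
    also have "\<dots> = emeasure lborel (B \<inter> {c<..<2*pi} \<union> B \<inter> {0..<c})"
      by (intro plus_emeasure) auto
    also have "\<dots> = emeasure lborel (B \<inter> {0<..<2*pi})"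
    proof (rule emeasure_eq_AE)
      show "AE x in lborel. (x \<in> B \<inter> {c<..<2 * pi} \<union> B \<inter> {0..<c}) = (x \<in> B \<inter> {0<..<2 * pi})"
        using AE_lborel_singleton[of c] AE_lborel_singleton[of 0]
        by eventually_elim (use c in auto)
    qed auto
    finally have *: "emeasure lborel (s -` B \<inter> {0<..<2*pi}) = emeasure lborel (B \<inter> {0<..<2*pi})" .
    have sB: "s -` B \<in> sets borel" using measurable_sets[OF sm B] by simp
    have "emeasure (distr unif2pi borel s) B = emeasure unif2pi (s -` B)"
      using sm by (subst emeasure_distr) (auto simp: unif2pi_def)
    also have "\<dots> = emeasure unif2pi B"
      unfolding unif2pi_def using sm B sB
      by (subst (1 2) emeasure_uniform_measure) (auto simp: Int_commute *)
    finally show "emeasure (distr unif2pi borel s) B = emeasure unif2pi B" .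
  qed simp
qed

lemma PiM_unif_transform_meas:
  fixes I :: "'i set" and \<sigma> :: "'i \<Rightarrow> 'i" and T :: "'i \<Rightarrow> real \<Rightarrow> real"
  assumes sI: "\<And>j. j \<in> I \<Longrightarrow> \<sigma> j \<in> I"
    and Tm: "\<And>i. i \<in> I \<Longrightarrow> T i \<in> borel_measurable borel"
  shows "(\<lambda>v. \<lambda>j\<in>I. T j (v (\<sigma> j))) \<in> measurable (PiM I (\<lambda>_. unif2pi)) (PiM I (\<lambda>_. borel))"
  proof (rule measurable_restrict)
    fix j assume j: "j \<in> I"
    have "(\<lambda>v. v (\<sigma> j)) \<in> measurable (PiM I (\<lambda>_. unif2pi)) unif2pi"
      using sI[OF j] by (rule measurable_component_singleton)
    then have "(\<lambda>v. v (\<sigma> j)) \<in> measurable (PiM I (\<lambda>_. unif2pi)) borel"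
      using measurable_cong_sets[OF refl sets_unif2pi] by metis
    then show "(\<lambda>v. T j (v (\<sigma> j))) \<in> measurable (PiM I (\<lambda>_. unif2pi)) borel"
      using Tm[OF j] by (rule measurable_compose)
  qed

lemma PiM_unif_transform:
  fixes I :: "'i set" and \<sigma> :: "'i \<Rightarrow> 'i" and T :: "'i \<Rightarrow> real \<Rightarrow> real"
  assumes fin: "finite I" and bij: "bij_betw \<sigma> I I"
    and Tm: "\<And>i. i \<in> I \<Longrightarrow> T i \<in> borel_measurable borel"
    and Td: "\<And>i. i \<in> I \<Longrightarrow> distr unif2pi borel (T i) = unif2pi"
  shows "distr (PiM I (\<lambda>_. unif2pi)) (PiM I (\<lambda>_. borel)) (\<lambda>v. \<lambda>j\<in>I. T j (v (\<sigma> j)))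
           = PiM I (\<lambda>_. unif2pi)"
proof -
  interpret product_sigma_finite "\<lambda>_. unif2pi"
    unfolding product_sigma_finite_def using prob_space_unif2pi
    by (auto intro: prob_space_imp_sigma_finite)
  have sI: "\<And>j. j \<in> I \<Longrightarrow> \<sigma> j \<in> I" using bij by (auto simp: bij_betw_def)
  have meas: "(\<lambda>v. \<lambda>j\<in>I. T j (v (\<sigma> j))) \<in> measurable (PiM I (\<lambda>_. unif2pi)) (PiM I (\<lambda>_. borel))"
  proof (rule measurable_restrict)
    fix j assume j: "j \<in> I"
    have "(\<lambda>v. v (\<sigma> j)) \<in> measurable (PiM I (\<lambda>_. unif2pi)) unif2pi"
      using sI[OF j] by (rule measurable_component_singleton)
    then have "(\<lambda>v. v (\<sigma> j)) \<in> measurable (PiM I (\<lambda>_. unif2pi)) borel"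
      using measurable_cong_sets[OF refl sets_unif2pi] by metis
    then show "(\<lambda>v. T j (v (\<sigma> j))) \<in> measurable (PiM I (\<lambda>_. unif2pi)) borel"
      using Tm[OF j] by (rule measurable_compose)
  qed
  define \<tau> where "\<tau> = inv_into I \<sigma>"
  have bij\<tau>: "bij_betw \<tau> I I" unfolding \<tau>_def by (rule bij_betw_inv_into[OF bij])
  have \<tau>I: "\<And>l. l \<in> I \<Longrightarrow> \<tau> l \<in> I" using bij\<tau> by (auto simp: bij_betw_def)
  have \<sigma>\<tau>: "\<And>l. l \<in> I \<Longrightarrow> \<sigma> (\<tau> l) = l" unfolding \<tau>_def using bij
    by (simp add: bij_betw_inv_into_right)
  have \<tau>\<sigma>: "\<And>j. j \<in> I \<Longrightarrow> \<tau> (\<sigma> j) = j" unfolding \<tau>_def using bij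
    by (simp add: bij_betw_inv_into_left)
  show ?thesis
  proof (rule PiM_eqI[OF fin])
    show "sets (distr (PiM I (\<lambda>_. unif2pi)) (PiM I (\<lambda>_. borel)) (\<lambda>v. \<lambda>j\<in>I. T j (v (\<sigma> j)))) = sets (PiM I (\<lambda>_. unif2pi))"
      unfolding sets_distr by (rule sets_PiM_cong) auto
  next
    fix A assume A: "\<And>i. i \<in> I \<Longrightarrow> A i \<in> sets unif2pi"
    have Ab: "PiE I A \<in> sets (PiM I (\<lambda>_. borel))"
      using A by (intro sets_PiM_I_finite fin) auto
    have pre: "(\<lambda>v. \<lambda>j\<in>I. T j (v (\<sigma> j))) -` PiE I A \<inter> space (PiM I (\<lambda>_. unif2pi))
             = PiE I (\<lambda>l. T (\<tau> l) -` A (\<tau> l))"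
    proof (intro set_eqI iffI)
      fix v assume "v \<in> (\<lambda>v. \<lambda>j\<in>I. T j (v (\<sigma> j))) -` PiE I A \<inter> space (PiM I (\<lambda>_. unif2pi))"
      then have v: "\<And>j. j \<in> I \<Longrightarrow> T j (v (\<sigma> j)) \<in> A j" "v \<in> extensional I"
        by (auto simp: space_PiM PiE_def Pi_def)
      show "v \<in> PiE I (\<lambda>l. T (\<tau> l) -` A (\<tau> l))"
        using v(1)[OF \<tau>I] v(2) \<sigma>\<tau> by (auto simp: PiE_def Pi_def)
    next
      fix v assume v: "v \<in> PiE I (\<lambda>l. T (\<tau> l) -` A (\<tau> l))"
      then have "\<And>j. j \<in> I \<Longrightarrow> T j (v (\<sigma> j)) \<in> A j"
        using sI \<tau>\<sigma> by (metis PiE_mem vimageE)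
      then show "v \<in> (\<lambda>v. \<lambda>j\<in>I. T j (v (\<sigma> j))) -` PiE I A \<inter> space (PiM I (\<lambda>_. unif2pi))"
        using v by (auto simp: space_PiM PiE_def Pi_def)
    qed
    have "emeasure (distr (PiM I (\<lambda>_. unif2pi)) (PiM I (\<lambda>_. borel)) (\<lambda>v. \<lambda>j\<in>I. T j (v (\<sigma> j)))) (PiE I A)
        = emeasure (PiM I (\<lambda>_. unif2pi)) (PiE I (\<lambda>l. T (\<tau> l) -` A (\<tau> l)))"
      using meas Ab by (subst emeasure_distr) (auto simp: pre)
    also have "\<dots> = (\<Prod>l\<in>I. emeasure unif2pi (T (\<tau> l) -` A (\<tau> l)))"
    proof (rule emeasure_PiM[OF fin])
      fix l assume l: "l \<in> I"
      show "T (\<tau> l) -` A (\<tau> l) \<in> sets unif2pi"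
        using measurable_sets[OF Tm[OF \<tau>I[OF l]], of "A (\<tau> l)"] A[OF \<tau>I[OF l]] by simp
    qed
    also have "\<dots> = (\<Prod>l\<in>I. emeasure unif2pi (A (\<tau> l)))"
    proof (rule prod.cong[OF refl])
      fix l assume l: "l \<in> I"
      have "emeasure unif2pi (A (\<tau> l)) = emeasure (distr unif2pi borel (T (\<tau> l))) (A (\<tau> l))"
        using Td[OF \<tau>I[OF l]] by simp
      also have "\<dots> = emeasure unif2pi (T (\<tau> l) -` A (\<tau> l))"
        using Tm[OF \<tau>I[OF l]] A[OF \<tau>I[OF l]] by (subst emeasure_distr) auto
      finally show "emeasure unif2pi (T (\<tau> l) -` A (\<tau> l)) = emeasure unif2pi (A (\<tau> l))" by simp
    qed
    also have "\<dots> = (\<Prod>j\<in>I. emeasure unif2pi (A j))"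
      using prod.reindex_bij_betw[OF bij\<tau>, of "\<lambda>j. emeasure unif2pi (A j)"] by simp
    finally show "emeasure (distr (PiM I (\<lambda>_. unif2pi)) (PiM I (\<lambda>_. borel)) (\<lambda>v. \<lambda>j\<in>I. T j (v (\<sigma> j)))) (PiE I A)
        = (\<Prod>j\<in>I. emeasure unif2pi (A j))" .
  qed
qed

lemma exists_perm2:
  fixes I D1 D2 E1 E2 :: "'i set"
  assumes "finite I" "D1 \<subseteq> I" "D2 \<subseteq> I" "E1 \<subseteq> I" "E2 \<subseteq> I"
    "D1 \<inter> D2 = {}" "E1 \<inter> E2 = {}" "card D1 = card E1" "card D2 = card E2"
  shows "\<exists>\<sigma>. bij_betw \<sigma> I I \<and> bij_betw \<sigma> D1 E1 \<and> bij_betw \<sigma> D2 E2"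
proof -
  have fin: "finite D1" "finite D2" "finite E1" "finite E2"
    using assms finite_subset by blast+
  obtain f1 where f1: "bij_betw f1 D1 E1" using finite_same_card_bij fin assms by metis
  obtain f2 where f2: "bij_betw f2 D2 E2" using finite_same_card_bij fin assms by metis
  have "card (I - (D1 \<union> D2)) = card I - card (D1 \<union> D2)"
    using assms by (intro card_Diff_subset) (auto intro: finite_subset)
  also have "card (D1 \<union> D2) = card (E1 \<union> E2)"
    using assms fin by (simp add: card_Un_disjoint)
  also have "card I - card (E1 \<union> E2) = card (I - (E1 \<union> E2))"
    using assms by (intro card_Diff_subset[symmetric]) (auto intro: finite_subset)
  finally obtain g where g: "bij_betw g (I - (D1 \<union> D2)) (I - (E1 \<union> E2))"
    using finite_same_card_bij assms by (metis finite_Diff)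
  define \<sigma> where "\<sigma> x = (if x \<in> D1 then f1 x else if x \<in> D2 then f2 x else g x)" for x
  have b1: "bij_betw \<sigma> D1 E1" using f1 by (rule bij_betw_cong[THEN iffD1, rotated]) (auto simp: \<sigma>_def)
  have b2: "bij_betw \<sigma> D2 E2" using f2 assms by (intro bij_betw_cong[THEN iffD1, OF _ f2]) (auto simp: \<sigma>_def)
  have b3: "bij_betw \<sigma> (I - (D1 \<union> D2)) (I - (E1 \<union> E2))"
    using g by (intro bij_betw_cong[THEN iffD1, OF _ g]) (auto simp: \<sigma>_def)
  have "bij_betw \<sigma> (D1 \<union> D2 \<union> (I - (D1 \<union> D2))) (E1 \<union> E2 \<union> (I - (E1 \<union> E2)))"
    using b1 b2 b3 assms by (intro bij_betw_combine) auto
  moreover have "D1 \<union> D2 \<union> (I - (D1 \<union> D2)) = I" "E1 \<union> E2 \<union> (I - (E1 \<union> E2)) = I"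
    using assms by auto
  ultimately show ?thesis using b1 b2 by auto
qed

definition shift2pi :: "real \<Rightarrow> real \<Rightarrow> real" where
  "shift2pi t x = (let c = t - 2*pi * of_int \<lfloor>t/(2*pi)\<rfloor> in if c + x < 2*pi then c + x else c + x - 2*pi)"

lemma shift2pi_props:
  "shift2pi t \<in> borel_measurable borel" "distr unif2pi borel (shift2pi t) = unif2pi"
  "cis (shift2pi t x) = cis (t + x)"
proof -
  define c where "c = t - 2*pi * of_int \<lfloor>t/(2*pi)\<rfloor>"
  have f: "shift2pi t = (\<lambda>x. if c + x < 2*pi then c + x else c + x - 2*pi)"
    by (simp add: shift2pi_def c_def fun_eq_iff Let_def)
  have "of_int \<lfloor>t/(2*pi)\<rfloor> \<le> t/(2*pi)" "t/(2*pi) < of_int \<lfloor>t/(2*pi)\<rfloor> + 1"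
    by linarith+
  then have "2*pi * of_int \<lfloor>t/(2*pi)\<rfloor> \<le> 2*pi*(t/(2*pi))" "2*pi*(t/(2*pi)) < 2*pi*(of_int \<lfloor>t/(2*pi)\<rfloor> + 1)"
    by (intro mult_left_mono mult_strict_left_mono; simp)+
  then have "2*pi * of_int \<lfloor>t/(2*pi)\<rfloor> \<le> t" "t < 2*pi*(of_int \<lfloor>t/(2*pi)\<rfloor> + 1)"
    by simp_all
  then have c: "0 \<le> c" "c < 2*pi" by (simp_all add: c_def algebra_simps)
  show "shift2pi t \<in> borel_measurable borel" "distr unif2pi borel (shift2pi t) = unif2pi"
    using unif2pi_shift[OF c] by (simp_all add: f)
  have cis_per: "cis (y - 2*pi * of_int n) = cis y" for y and n :: int
  proof -
    have "cis (2*pi * of_int n) = 1" by (rule cis_multiple_2pi) simp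
    then show ?thesis by (metis cis_divide div_by_1)
  qed
  have "cis (c + x) = cis (t + x)"
    using cis_per[of "t + x" "\<lfloor>t/(2*pi)\<rfloor>"] by (simp add: c_def algebra_simps)
  moreover have "cis (c + x - 2*pi) = cis (t + x)"
    using cis_per[of "t + x" "\<lfloor>t/(2*pi)\<rfloor> + 1"] by (simp add: c_def algebra_simps)
  ultimately show "cis (shift2pi t x) = cis (t + x)" by (simp add: f)
qed

lemma mean_Rbar:
  fixes \<theta> :: "nat \<Rightarrow> real" and A1 A2 :: "nat set"
  assumes A1: "A1 \<subseteq> {1..L div 2}" and A2: "A2 \<subseteq> {L div 2 + 1..L}"
  shows "(\<integral>v. log b (1 + ((cmod (\<Sum>l\<in>A1. cis (\<theta> l + v l)))\<^sup>2 + (cmod (\<Sum>l\<in>A2. cis (\<theta> l + v l)))\<^sup>2) * P)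
            \<partial>PiM {1..L} (\<lambda>_. unif2pi)) = Rbar b L P (card A1) (card A2)"
proof -
  define h where "h = L div 2"
  define I where "I = {1..L}"
  define a1 where "a1 = card A1"
  define a2 where "a2 = card A2"
  have "a1 \<le> card {1..h}" unfolding a1_def h_def using A1 by (intro card_mono) auto
  then have a1: "a1 \<le> h" by simp
  have "a2 \<le> card {h+1..L}" unfolding a2_def h_def using A2 by (intro card_mono) auto
  moreover have "h \<le> L" unfolding h_def by simp
  ultimately have a2: "h + a2 \<le> L" by simp
  have disj: "A1 \<inter> A2 = {}"
  proof (intro equalityI subsetI)
    fix x assume "x \<in> A1 \<inter> A2"
    then have "x \<le> L div 2" "x \<ge> L div 2 + 1" using A1 A2 by auto
    then show "x \<in> {}" by simp
  qed simp
  have "\<exists>\<sigma>. bij_betw \<sigma> I I \<and> bij_betw \<sigma> {1..a1} A1 \<and> bij_betw \<sigma> {h+1..h+a2} A2"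
    using A1 A2 a1 a2 unfolding I_def h_def
    by (intro exists_perm2 disj) (auto simp: a1_def a2_def h_def)
  then obtain \<sigma> where \<sigma>: "bij_betw \<sigma> I I" "bij_betw \<sigma> {1..a1} A1" "bij_betw \<sigma> {h+1..h+a2} A2"
    by blast
  have sI: "\<And>j. j \<in> I \<Longrightarrow> \<sigma> j \<in> I" using \<sigma>(1) by (auto simp: bij_betw_def)
  define T where "T j = shift2pi (\<theta> (\<sigma> j))" for j
  define \<Psi> where "\<Psi> w = log b (1 + (cmod (\<Sum>l=1..a1. cis (w l)))\<^sup>2 * P
                     + (cmod (\<Sum>l=h + 1..h + a2. cis (w l)))\<^sup>2 * P)" for w :: "nat \<Rightarrow> real"
  have Tm: "\<And>j. j \<in> I \<Longrightarrow> T j \<in> borel_measurable borel" by (simp add: T_def shift2pi_props)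
  have Td: "\<And>j. j \<in> I \<Longrightarrow> distr unif2pi borel (T j) = unif2pi" by (simp add: T_def shift2pi_props)
  have meas: "(\<lambda>v. \<lambda>j\<in>I. T j (v (\<sigma> j))) \<in> measurable (PiM I (\<lambda>_. unif2pi)) (PiM I (\<lambda>_. borel))"
    by (rule PiM_unif_transform_meas[OF sI Tm])
  have comp: "\<And>j. j \<in> I \<Longrightarrow> (\<lambda>w. w j) \<in> borel_measurable (PiM I (\<lambda>_. borel))"
    by (rule measurable_component_singleton)
  have s1: "(\<lambda>w. \<Sum>l=1..a1. cis (w l)) \<in> borel_measurable (PiM I (\<lambda>_. borel))"
  proof (rule borel_measurable_sum)
    fix l assume "l \<in> {1..a1}"
    then have "l \<in> I" using a1 a2 by (auto simp: I_def h_def)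
    show "(\<lambda>w. cis (w l)) \<in> borel_measurable (PiM I (\<lambda>_. borel))"
      by (rule measurable_compose[OF comp[OF \<open>l \<in> I\<close>]]) (intro borel_measurable_continuous_onI continuous_intros)
  qed
  have s2: "(\<lambda>w. \<Sum>l=h+1..h+a2. cis (w l)) \<in> borel_measurable (PiM I (\<lambda>_. borel))"
  proof (rule borel_measurable_sum)
    fix l assume "l \<in> {h+1..h+a2}"
    then have "l \<in> I" using a1 a2 by (auto simp: I_def h_def)
    show "(\<lambda>w. cis (w l)) \<in> borel_measurable (PiM I (\<lambda>_. borel))"
      by (rule measurable_compose[OF comp[OF \<open>l \<in> I\<close>]]) (intro borel_measurable_continuous_onI continuous_intros)
  qed
  have \<Psi>m: "\<Psi> \<in> borel_measurable (PiM I (\<lambda>_. borel))"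
    unfolding \<Psi>_def using s1 s2 by measurable
  have "Rbar b L P a1 a2 = (\<integral>w. \<Psi> w \<partial>PiM I (\<lambda>_. unif2pi))"
    by (simp add: Rbar_def \<Psi>_def I_def h_def)
  also have "\<dots> = (\<integral>w. \<Psi> w \<partial>distr (PiM I (\<lambda>_. unif2pi)) (PiM I (\<lambda>_. borel)) (\<lambda>v. \<lambda>j\<in>I. T j (v (\<sigma> j))))"
    by (subst PiM_unif_transform[OF _ \<sigma>(1) Tm Td]) (simp_all add: I_def)
  also have "\<dots> = (\<integral>v. \<Psi> (\<lambda>j\<in>I. T j (v (\<sigma> j))) \<partial>PiM I (\<lambda>_. unif2pi))"
    by (rule integral_distr[OF meas \<Psi>m])
  also have "\<dots> = (\<integral>v. log b (1 + ((cmod (\<Sum>l\<in>A1. cis (\<theta> l + v l)))\<^sup>2 + (cmod (\<Sum>l\<in>A2. cis (\<theta> l + v l)))\<^sup>2) * P)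
            \<partial>PiM I (\<lambda>_. unif2pi))"
  proof (rule Bochner_Integration.integral_cong[OF refl])
    fix v :: "nat \<Rightarrow> real"
    have e1: "(\<Sum>l=1..a1. cis ((\<lambda>j\<in>I. T j (v (\<sigma> j))) l)) = (\<Sum>l\<in>A1. cis (\<theta> l + v l))"
    proof -
      have "(\<Sum>l=1..a1. cis ((\<lambda>j\<in>I. T j (v (\<sigma> j))) l)) = (\<Sum>l=1..a1. cis (\<theta> (\<sigma> l) + v (\<sigma> l)))"
        using a1 a2 by (intro sum.cong refl) (auto simp: I_def h_def T_def shift2pi_props)
      also have "\<dots> = (\<Sum>l\<in>A1. cis (\<theta> l + v l))"
        by (rule sum.reindex_bij_betw[OF \<sigma>(2)])
      finally show ?thesis .
    qed
    have e2: "(\<Sum>l=h+1..h+a2. cis ((\<lambda>j\<in>I. T j (v (\<sigma> j))) l)) = (\<Sum>l\<in>A2. cis (\<theta> l + v l))"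
    proof -
      have "(\<Sum>l=h+1..h+a2. cis ((\<lambda>j\<in>I. T j (v (\<sigma> j))) l)) = (\<Sum>l=h+1..h+a2. cis (\<theta> (\<sigma> l) + v (\<sigma> l)))"
        using a1 a2 by (intro sum.cong refl) (auto simp: I_def h_def T_def shift2pi_props)
      also have "\<dots> = (\<Sum>l\<in>A2. cis (\<theta> l + v l))"
        by (rule sum.reindex_bij_betw[OF \<sigma>(3)])
      finally show ?thesis .
    qed
    show "\<Psi> (\<lambda>j\<in>I. T j (v (\<sigma> j))) = log b (1 + ((cmod (\<Sum>l\<in>A1. cis (\<theta> l + v l)))\<^sup>2 + (cmod (\<Sum>l\<in>A2. cis (\<theta> l + v l)))\<^sup>2) * P)"
      unfolding \<Psi>_def e1 e2 by (simp add: algebra_simps)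
  qed
  finally show ?thesis by (simp add: I_def a1_def a2_def)
qed

definition bc :: "real \<Rightarrow> real" where "bc r = (if r = 1 then 1 else 0)"

definition Zf :: "real \<Rightarrow> nat \<Rightarrow> real \<Rightarrow> (nat \<Rightarrow> real) \<times> (nat \<Rightarrow> real) \<Rightarrow> (nat \<Rightarrow> real) \<Rightarrow> real" where
  "Zf b L P u \<phi> = log b (1 + ((cmod (\<Sum>l=1..L div 2. complex_of_real (bc (fst u l)) * cis (snd u l + \<phi> l)))\<^sup>2
        + (cmod (\<Sum>l=L div 2 + 1..L. complex_of_real (bc (fst u l)) * cis (snd u l + \<phi> l)))\<^sup>2) * P)"

definition Rf :: "real \<Rightarrow> nat \<Rightarrow> real \<Rightarrow> (nat \<Rightarrow> real) \<Rightarrow> real" where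
  "Rf b L P \<beta> = Rbar b L P (nat \<lfloor>\<Sum>l=1..L div 2. bc (\<beta> l)\<rfloor>) (nat \<lfloor>\<Sum>l=L div 2 + 1..L. bc (\<beta> l)\<rfloor>)"

definition Yf :: "real \<Rightarrow> nat \<Rightarrow> real \<Rightarrow> (nat \<Rightarrow> real) \<times> (nat \<Rightarrow> real) \<Rightarrow> (nat \<Rightarrow> real) \<Rightarrow> real" where
  "Yf b L P u \<phi> = Zf b L P u \<phi> - Rf b L P (fst u)"

lemma bc_meas[measurable]: "bc \<in> borel_measurable borel"
  unfolding bc_def by measurable

lemma comp_meas:
  assumes "f \<in> measurable N (PiM I (\<lambda>_. borel))" "l \<in> I"
  shows "(\<lambda>x. f x l :: real) \<in> borel_measurable N"
  using measurable_compose[OF assms(1) measurable_component_singleton[OF assms(2)]] .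

lemma sum_meas3:
  assumes B: "\<And>l. l \<in> S \<Longrightarrow> (\<lambda>x. B x l) \<in> borel_measurable N"
    and T: "\<And>l. l \<in> S \<Longrightarrow> (\<lambda>x. T x l) \<in> borel_measurable N"
    and F: "\<And>l. l \<in> S \<Longrightarrow> (\<lambda>x. F x l) \<in> borel_measurable N"
  shows "(\<lambda>x. \<Sum>l\<in>S. complex_of_real (bc (B x l)) * cis (T x l + F x l)) \<in> borel_measurable N"
proof (rule borel_measurable_sum)
  fix l assume l: "l \<in> S"
  note [measurable] = B[OF l] T[OF l] F[OF l]
  have [measurable]: "cis \<in> borel_measurable borel"
    by (intro borel_measurable_continuous_onI continuous_intros)
  show "(\<lambda>x. complex_of_real (bc (B x l)) * cis (T x l + F x l)) \<in> borel_measurable N"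
    by measurable
qed

lemma sum_meas_bc:
  assumes B: "\<And>l. l \<in> S \<Longrightarrow> (\<lambda>x. B x l) \<in> borel_measurable N"
  shows "(\<lambda>x. \<Sum>l\<in>S. bc (B x l)) \<in> borel_measurable N"
proof (rule borel_measurable_sum)
  fix l assume l: "l \<in> S"
  note [measurable] = B[OF l]
  show "(\<lambda>x. bc (B x l)) \<in> borel_measurable N" by measurable
qed

lemma Zf_meas:
  assumes B: "\<And>l. l \<in> {1..L} \<Longrightarrow> (\<lambda>x. B x l) \<in> borel_measurable N"
    and T: "\<And>l. l \<in> {1..L} \<Longrightarrow> (\<lambda>x. T x l) \<in> borel_measurable N"
    and F: "\<And>l. l \<in> {1..L} \<Longrightarrow> (\<lambda>x. F x l) \<in> borel_measurable N"
  shows "(\<lambda>x. Zf b L P (B x, T x) (F x)) \<in> borel_measurable N"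
proof -
  define S1 where "S1 = (\<lambda>x. \<Sum>l=1..L div 2. complex_of_real (bc (B x l)) * cis (T x l + F x l))"
  define S2 where "S2 = (\<lambda>x. \<Sum>l=L div 2 + 1..L. complex_of_real (bc (B x l)) * cis (T x l + F x l))"
  have [measurable]: "S1 \<in> borel_measurable N" unfolding S1_def by (rule sum_meas3) (auto intro!: B T F)
  have [measurable]: "S2 \<in> borel_measurable N" unfolding S2_def by (rule sum_meas3) (auto intro!: B T F)
  have e: "(\<lambda>x. Zf b L P (B x, T x) (F x)) = (\<lambda>x. log b (1 + ((cmod (S1 x))\<^sup>2 + (cmod (S2 x))\<^sup>2) * P))"
    by (simp add: Zf_def S1_def S2_def)
  show ?thesis unfolding e by measurable
qed

lemma Rf_meas:
  assumes B: "\<And>l. l \<in> {1..L} \<Longrightarrow> (\<lambda>x. B x l) \<in> borel_measurable N"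
  shows "(\<lambda>x. Rf b L P (B x)) \<in> borel_measurable N"
proof -
  define S1 where "S1 = (\<lambda>x. \<Sum>l=1..L div 2. bc (B x l))"
  define S2 where "S2 = (\<lambda>x. \<Sum>l=L div 2 + 1..L. bc (B x l))"
  have [measurable]: "S1 \<in> borel_measurable N" unfolding S1_def by (rule sum_meas_bc) (auto intro!: B)
  have [measurable]: "S2 \<in> borel_measurable N" unfolding S2_def by (rule sum_meas_bc) (auto intro!: B)
  have e: "(\<lambda>x. Rf b L P (B x)) = (\<lambda>x. Rbar b L P (nat \<lfloor>S1 x\<rfloor>) (nat \<lfloor>S2 x\<rfloor>))"
    by (simp add: Rf_def S1_def S2_def)
  show ?thesis unfolding e by measurable
qed

lemma Yf_meas:
  assumes B: "\<And>l. l \<in> {1..L} \<Longrightarrow> (\<lambda>x. B x l) \<in> borel_measurable N"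
    and T: "\<And>l. l \<in> {1..L} \<Longrightarrow> (\<lambda>x. T x l) \<in> borel_measurable N"
    and F: "\<And>l. l \<in> {1..L} \<Longrightarrow> (\<lambda>x. F x l) \<in> borel_measurable N"
  shows "(\<lambda>x. Yf b L P (B x, T x) (F x)) \<in> borel_measurable N"
  unfolding Yf_def fst_conv using Zf_meas[OF B T F] Rf_meas[OF B] by measurable

definition cst :: "real \<Rightarrow> nat \<Rightarrow> real \<Rightarrow> real" where
  "cst b L P = ln (1 + 2 * (real L)\<^sup>2 * P) / \<bar>ln b\<bar>"

lemma log_bound:
  assumes "1 \<le> y" "y \<le> Y"
  shows "\<bar>log b y\<bar> \<le> ln Y / \<bar>ln b\<bar>"
proof -
  have "\<bar>log b y\<bar> = ln y / \<bar>ln b\<bar>" using assms by (simp add: log_def abs_divide)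
  also have "\<dots> \<le> ln Y / \<bar>ln b\<bar>" using assms by (intro divide_right_mono) auto
  finally show ?thesis .
qed

lemma cmod_sum_le_card:
  assumes "\<And>l. l \<in> S \<Longrightarrow> cmod (f l) \<le> 1"
  shows "cmod (\<Sum>l\<in>S. f l) \<le> real (card S)"
proof -
  have "cmod (\<Sum>l\<in>S. f l) \<le> (\<Sum>l\<in>S. cmod (f l))" by (rule norm_sum)
  also have "\<dots> \<le> (\<Sum>l\<in>S. 1)" using assms by (intro sum_mono) auto
  finally show ?thesis by simp
qed

lemma arg_bound:
  assumes "P \<ge> 0" "0 \<le> c1" "c1 \<le> real L" "0 \<le> c2" "c2 \<le> real L"
  shows "1 \<le> 1 + (c1\<^sup>2 + c2\<^sup>2) * P" "1 + (c1\<^sup>2 + c2\<^sup>2) * P \<le> 1 + 2 * (real L)\<^sup>2 * P"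
proof -
  show "1 \<le> 1 + (c1\<^sup>2 + c2\<^sup>2) * P" using assms by simp
  have "c1\<^sup>2 \<le> (real L)\<^sup>2" "c2\<^sup>2 \<le> (real L)\<^sup>2" using assms by (intro power_mono; simp)+
  then have "c1\<^sup>2 + c2\<^sup>2 \<le> 2 * (real L)\<^sup>2" by simp
  then show "1 + (c1\<^sup>2 + c2\<^sup>2) * P \<le> 1 + 2 * (real L)\<^sup>2 * P"
    using assms(1) mult_right_mono by fastforce
qed

lemma Zf_bound:
  assumes "P \<ge> 0"
  shows "\<bar>Zf b L P u \<phi>\<bar> \<le> cst b L P"
proof -
  have n: "cmod (complex_of_real (bc r) * cis t) \<le> 1" for r t
    by (simp add: bc_def norm_mult)
  have c1: "cmod (\<Sum>l=1..L div 2. complex_of_real (bc (fst u l)) * cis (snd u l + \<phi> l)) \<le> real L"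
    by (rule order_trans[OF cmod_sum_le_card[OF n]]) simp
  have c2: "cmod (\<Sum>l=L div 2 + 1..L. complex_of_real (bc (fst u l)) * cis (snd u l + \<phi> l)) \<le> real L"
    by (rule order_trans[OF cmod_sum_le_card[OF n]]) simp
  show ?thesis unfolding Zf_def cst_def
    using arg_bound[OF assms _ c1 _ c2] by (intro log_bound) auto
qed

lemma abs_integral_le_prob:
  fixes f :: "'a \<Rightarrow> real"
  assumes "prob_space M" "\<And>x. \<bar>f x\<bar> \<le> c"
  shows "\<bar>integral\<^sup>L M f\<bar> \<le> c"
proof -
  interpret prob_space M by fact
  have c: "0 \<le> c" using assms(2)[of undefined] by simp
  have "integral\<^sup>L M f \<le> c"
  proof (rule integral_real_bounded[OF c])
    show "(\<integral>\<^sup>+x. ennreal (f x) \<partial>M) \<le> ennreal c"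
      using assms(2) c by (intro nn_integral_le_const) (auto simp: abs_le_iff)
  qed
  moreover have "integral\<^sup>L M (\<lambda>x. - f x) \<le> c"
  proof (rule integral_real_bounded[OF c])
    show "(\<integral>\<^sup>+x. ennreal (- f x) \<partial>M) \<le> ennreal c"
      using assms(2) c by (intro nn_integral_le_const) (auto simp: abs_le_iff)
  qed
  ultimately show ?thesis by (simp add: abs_le_iff)
qed

lemma Rbar_bound:
  assumes "P \<ge> 0" "i \<le> L" "L div 2 + j \<le> L"
  shows "\<bar>Rbar b L P i j\<bar> \<le> cst b L P"
  unfolding Rbar_def
proof (rule abs_integral_le_prob)
  show "prob_space (PiM {1..L} (\<lambda>_. unif2pi))"
    by (intro prob_space_PiM prob_space_unif2pi)
  fix v :: "nat \<Rightarrow> real"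
  have c1: "cmod (\<Sum>l=1..i. cis (v l)) \<le> real L"
    by (rule order_trans[OF cmod_sum_le_card]) (use assms in auto)
  have c2: "cmod (\<Sum>l=L div 2 + 1..L div 2 + j. cis (v l)) \<le> real L"
    by (rule order_trans[OF cmod_sum_le_card]) (use assms in auto)
  show "\<bar>log b (1 + (cmod (\<Sum>l=1..i. cis (v l)))\<^sup>2 * P + (cmod (\<Sum>l=L div 2 + 1..L div 2 + j. cis (v l)))\<^sup>2 * P)\<bar> \<le> cst b L P"
    unfolding cst_def
    using arg_bound[OF assms(1) _ c1 _ c2] by (intro log_bound) (auto simp: algebra_simps)
qed

lemma sum_bc_eq:
  "(\<Sum>l\<in>S. bc (\<beta> l)) = real (card {l\<in>S. \<beta> l = 1})" if "finite S"
  using that by (simp add: bc_def sum.If_cases Int_def)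

lemma Rf_bound:
  assumes "P \<ge> 0"
  shows "\<bar>Rf b L P \<beta>\<bar> \<le> cst b L P"
proof -
  have "card {l\<in>{1..L div 2}. \<beta> l = 1} \<le> card {1..L div 2}" by (intro card_mono) auto
  then have i: "card {l\<in>{1..L div 2}. \<beta> l = 1} \<le> L" by simp
  have "card {l\<in>{L div 2 + 1..L}. \<beta> l = 1} \<le> card {L div 2 + 1..L}" by (intro card_mono) auto
  then have j: "L div 2 + card {l\<in>{L div 2 + 1..L}. \<beta> l = 1} \<le> L" by simp
  show ?thesis unfolding Rf_def sum_bc_eq[OF finite_atLeastAtMost] floor_of_nat nat_int
    by (rule Rbar_bound[OF assms i j])
qed

lemma Yf_bound:
  assumes "P \<ge> 0"
  shows "\<bar>Yf b L P u \<phi>\<bar> \<le> 2 * cst b L P"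
  using Zf_bound[OF assms, of b L u \<phi>] Rf_bound[OF assms, of b L "fst u"] unfolding Yf_def by linarith

lemma Yf_mean_zero:
  assumes "P \<ge> 0"
  shows "(\<integral>\<phi>. Yf b L P (\<beta>, \<theta>) \<phi> \<partial>PiM {1..L} (\<lambda>_. unif2pi)) = 0"
proof -
  define A1 where "A1 = {l\<in>{1..L div 2}. \<beta> l = 1}"
  define A2 where "A2 = {l\<in>{L div 2 + 1..L}. \<beta> l = 1}"
  have s: "(\<Sum>l\<in>S. complex_of_real (bc (\<beta> l)) * cis (\<theta> l + \<phi> l)) = (\<Sum>l\<in>{l\<in>S. \<beta> l = 1}. cis (\<theta> l + \<phi> l))"
    if "finite S" for S \<phi>
    using that by (simp add: sum.inter_filter bc_def) (intro sum.cong; simp)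
  have Z: "Zf b L P (\<beta>, \<theta>) \<phi> = log b (1 + ((cmod (\<Sum>l\<in>A1. cis (\<theta> l + \<phi> l)))\<^sup>2 + (cmod (\<Sum>l\<in>A2. cis (\<theta> l + \<phi> l)))\<^sup>2) * P)" for \<phi>
    unfolding Zf_def fst_conv snd_conv A1_def A2_def s[OF finite_atLeastAtMost] ..
  have R: "Rf b L P \<beta> = Rbar b L P (card A1) (card A2)"
    unfolding Rf_def sum_bc_eq[OF finite_atLeastAtMost] floor_of_nat nat_int A1_def A2_def ..
  have prob: "prob_space (PiM {1..L} (\<lambda>_. unif2pi))"
    by (intro prob_space_PiM prob_space_unif2pi)
  have int: "integrable (PiM {1..L} (\<lambda>_. unif2pi)) (\<lambda>\<phi>. Zf b L P (\<beta>, \<theta>) \<phi>)"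
  proof (rule finite_measure.integrable_const_bound)
    show "finite_measure (PiM {1..L} (\<lambda>_. unif2pi))" using prob by (rule prob_space.finite_measure)
    show "AE x in PiM {1..L} (\<lambda>_. unif2pi). norm (Zf b L P (\<beta>, \<theta>) x) \<le> cst b L P"
      using Zf_bound[OF assms] by simp
    have "(\<lambda>x. Zf b L P ((\<lambda>_. \<beta>) x, (\<lambda>_. \<theta>) x) (x)) \<in> borel_measurable (PiM {1..L} (\<lambda>_. unif2pi))"
    proof (rule Zf_meas)
      fix l :: nat assume "l \<in> {1..L}"
      then show "(\<lambda>x. x l) \<in> borel_measurable (PiM {1..L} (\<lambda>_. unif2pi))"
        using measurable_component_singleton[of l "{1..L}" "\<lambda>_. unif2pi"]
          measurable_cong_sets[OF refl sets_unif2pi] by metis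
    qed auto
    then show "(\<lambda>\<phi>. Zf b L P (\<beta>, \<theta>) \<phi>) \<in> borel_measurable (PiM {1..L} (\<lambda>_. unif2pi))" by simp
  qed
  have "(\<integral>\<phi>. Yf b L P (\<beta>, \<theta>) \<phi> \<partial>PiM {1..L} (\<lambda>_. unif2pi))
      = (\<integral>\<phi>. Zf b L P (\<beta>, \<theta>) \<phi> \<partial>PiM {1..L} (\<lambda>_. unif2pi)) - Rf b L P \<beta>"
    unfolding Yf_def fst_conv using int prob
    by (subst Bochner_Integration.integral_diff) (auto simp: prob_space.prob_space prob_space.finite_measure finite_measure.integrable_const)
  also have "(\<integral>\<phi>. Zf b L P (\<beta>, \<theta>) \<phi> \<partial>PiM {1..L} (\<lambda>_. unif2pi)) = Rbar b L P (card A1) (card A2)"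
    unfolding Z by (rule mean_Rbar) (auto simp: A1_def A2_def)
  finally show ?thesis using R by simp
qed

lemma (in prob_space) orth:
  fixes g :: "_ \<Rightarrow> real" and hh :: "_ \<Rightarrow> real"
  assumes ind: "indep_var S T N V"
    and g[measurable]: "g \<in> borel_measurable (S \<Otimes>\<^sub>M N)" and hh[measurable]: "hh \<in> borel_measurable S"
    and gb: "\<And>p. \<bar>g p\<bar> \<le> c" and hb: "\<And>t. \<bar>hh t\<bar> \<le> c"
    and z: "\<And>t. t \<in> space S \<Longrightarrow> (\<integral>v. g (t, v) \<partial>distr M N V) = 0"
  shows "(\<integral>x. hh (T x) * g (T x, V x) \<partial>M) = 0"
proof -
  have rv[measurable]: "T \<in> measurable M S" "V \<in> measurable M N"
    and eq: "distr M S T \<Otimes>\<^sub>M distr M N V = distr M (S \<Otimes>\<^sub>M N) (\<lambda>x. (T x, V x))"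
    using ind by (simp_all add: indep_var_distribution_eq)
  interpret PT: prob_space "distr M S T" by (rule prob_space_distr) simp
  interpret PV: prob_space "distr M N V" by (rule prob_space_distr) simp
  interpret PP: pair_prob_space "distr M S T" "distr M N V" ..
  define F where "F p = hh (fst p) * g p" for p
  have Fm[measurable]: "F \<in> borel_measurable (S \<Otimes>\<^sub>M N)" unfolding F_def by measurable
  have c: "0 \<le> c" using hb[of undefined] by simp
  have Fb: "\<bar>F p\<bar> \<le> c * c" for p
    unfolding F_def abs_mult using hb gb c by (intro mult_mono) auto
  have Fint: "integrable (distr M S T \<Otimes>\<^sub>M distr M N V) F"
  proof (rule PP.integrable_const_bound[where B="c*c"])
    show "AE x in distr M S T \<Otimes>\<^sub>M distr M N V. norm (F x) \<le> c * c" using Fb by simp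
    show "F \<in> borel_measurable (distr M S T \<Otimes>\<^sub>M distr M N V)"
      using Fm by (simp add: measurable_cong_sets[OF sets_pair_measure_cong[OF sets_distr sets_distr] refl])
  qed
  have "(\<integral>x. hh (T x) * g (T x, V x) \<partial>M) = (\<integral>p. F p \<partial>distr M (S \<Otimes>\<^sub>M N) (\<lambda>x. (T x, V x)))"
    by (subst integral_distr) (auto simp: F_def)
  also have "\<dots> = (\<integral>p. F p \<partial>(distr M S T \<Otimes>\<^sub>M distr M N V))" by (simp add: eq)
  also have "\<dots> = (\<integral>t. (\<integral>v. F (t, v) \<partial>distr M N V) \<partial>distr M S T)"
    by (rule PP.integral_fst'[OF Fint, symmetric])
  also have "\<dots> = (\<integral>t. 0 \<partial>distr M S T)"
  proof (rule Bochner_Integration.integral_cong[OF refl])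
    fix t assume "t \<in> space (distr M S T)"
    then have t: "t \<in> space S" by simp
    have "(\<integral>v. F (t, v) \<partial>distr M N V) = hh t * (\<integral>v. g (t, v) \<partial>distr M N V)"
      unfolding F_def fst_conv by (rule integral_mult_right_zero)
    then show "(\<integral>v. F (t, v) \<partial>distr M N V) = 0" using z[OF t] by simp
  qed
  finally show ?thesis by simp
qed

lemma Yf_cong:
  assumes "\<And>l. l \<in> {1..L} \<Longrightarrow> \<beta> l = \<beta>' l" "\<And>l. l \<in> {1..L} \<Longrightarrow> \<theta> l = \<theta>' l"
    "\<And>l. l \<in> {1..L} \<Longrightarrow> \<phi> l = \<phi>' l"
  shows "Yf b L P (\<beta>, \<theta>) \<phi> = Yf b L P (\<beta>', \<theta>') \<phi>'"
proof -
  have a: "(\<Sum>l\<in>S. complex_of_real (bc (\<beta> l)) * cis (\<theta> l + \<phi> l)) = (\<Sum>l\<in>S. complex_of_real (bc (\<beta>' l)) * cis (\<theta>' l + \<phi>' l))"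
    if "S \<subseteq> {1..L}" for S
    using assms that by (intro sum.cong) auto
  have c: "(\<Sum>l\<in>S. bc (\<beta> l)) = (\<Sum>l\<in>S. bc (\<beta>' l))" if "S \<subseteq> {1..L}" for S
    using assms that by (intro sum.cong) auto
  show ?thesis unfolding Yf_def Zf_def Rf_def fst_conv snd_conv
    by (subst (1 2) a, simp, simp, subst (1 2) c, simp, simp) (rule refl)
qed

lemma (in prob_space) distr_Phi:
  fixes Xc :: "rv_idx \<Rightarrow> 'a \<Rightarrow> real"
  assumes ind: "indep_vars (\<lambda>_. borel) Xc J"
    and sub: "K \<subseteq> J" "K \<noteq> {}"
    and unif: "\<And>i. i \<in> K \<Longrightarrow> distr M borel (Xc i) = unif2pi"
  shows "distr M (PiM K (\<lambda>_. borel)) (\<lambda>x. \<lambda>i\<in>K. Xc i x) = PiM K (\<lambda>_. unif2pi)"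
proof -
  have indK: "indep_vars (\<lambda>_. borel) Xc K" using indep_vars_subset[OF ind sub(1)] .
  have rv: "\<And>i. i \<in> K \<Longrightarrow> random_variable borel (Xc i)"
    using indK by (simp add: indep_vars_def)
  have "distr M (PiM K (\<lambda>_. borel)) (\<lambda>x. \<lambda>i\<in>K. Xc i x) = PiM K (\<lambda>i. distr M borel (Xc i))"
    using indep_vars_iff_distr_eq_PiM'[OF sub(2) rv] indK by simp
  also have "\<dots> = PiM K (\<lambda>_. unif2pi)"
    using unif by (intro PiM_cong) auto
  finally show ?thesis .
qed

lemma Yf_meas_PiM:
  "(\<lambda>\<phi>. Yf b L P u \<phi>) \<in> borel_measurable (PiM {1..L} (\<lambda>_. unif2pi))"
proof -
  have "(\<lambda>x. Yf b L P ((\<lambda>_. fst u) x, (\<lambda>_. snd u) x) (x)) \<in> borel_measurable (PiM {1..L} (\<lambda>_. unif2pi))"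
  proof (rule Yf_meas)
    fix l :: nat assume "l \<in> {1..L}"
    then show "(\<lambda>x. x l) \<in> borel_measurable (PiM {1..L} (\<lambda>_. unif2pi))"
      using measurable_component_singleton[of l "{1..L}" "\<lambda>_. unif2pi"]
        measurable_cong_sets[OF refl sets_unif2pi] by metis
  qed auto
  then show ?thesis by simp
qed

lemma mean_zero_Phi:
  fixes k L :: nat
  defines "Kk \<equiv> (\<lambda>l. Phi l k) ` {1..L}"
  assumes "P \<ge> 0"
  shows "(\<integral>v. Yf b L P (\<beta>, \<theta>) (\<lambda>l. v (Phi l k)) \<partial>PiM Kk (\<lambda>_. unif2pi)) = 0"
proof -
  have inj: "inj_on (\<lambda>l. Phi l k) {1..L}" by (auto simp: inj_on_def)
  have f: "(\<lambda>l. Phi l k) \<in> {1..L} \<rightarrow> Kk" by (auto simp: Kk_def)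
  have D: "distr (PiM Kk (\<lambda>_. unif2pi)) (PiM {1..L} (\<lambda>_. unif2pi)) (\<lambda>\<omega>. \<lambda>n\<in>{1..L}. \<omega> (Phi n k))
      = PiM {1..L} (\<lambda>_. unif2pi)"
    using distr_PiM_reindex[of Kk "\<lambda>_. unif2pi", OF _ inj f] prob_space_unif2pi by simp
  have meas: "(\<lambda>\<omega>. \<lambda>n\<in>{1..L}. \<omega> (Phi n k)) \<in> measurable (PiM Kk (\<lambda>_. unif2pi)) (PiM {1..L} (\<lambda>_. unif2pi))"
  proof (rule measurable_restrict)
    fix n assume "n \<in> {1..L}"
    then have "Phi n k \<in> Kk" by (auto simp: Kk_def)
    then show "(\<lambda>\<omega>. \<omega> (Phi n k)) \<in> measurable (PiM Kk (\<lambda>_. unif2pi)) unif2pi"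
      by (rule measurable_component_singleton)
  qed
  have "(\<integral>v. Yf b L P (\<beta>, \<theta>) (\<lambda>l. v (Phi l k)) \<partial>PiM Kk (\<lambda>_. unif2pi))
      = (\<integral>v. Yf b L P (\<beta>, \<theta>) ((\<lambda>\<omega>. \<lambda>n\<in>{1..L}. \<omega> (Phi n k)) v) \<partial>PiM Kk (\<lambda>_. unif2pi))"
    by (intro Bochner_Integration.integral_cong refl Yf_cong) auto
  also have "\<dots> = (\<integral>\<phi>. Yf b L P (\<beta>, \<theta>) \<phi> \<partial>distr (PiM Kk (\<lambda>_. unif2pi)) (PiM {1..L} (\<lambda>_. unif2pi)) (\<lambda>\<omega>. \<lambda>n\<in>{1..L}. \<omega> (Phi n k)))"
    by (rule integral_distr[OF meas Yf_meas_PiM, symmetric])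
  also have "\<dots> = 0" unfolding D by (rule Yf_mean_zero[OF assms(2)])
  finally show ?thesis .
qed

theorem proposition7:
  fixes M :: "'a measure"
    and b :: real and L :: nat and P pB \<epsilon> :: real
    and beta theta :: "nat \<Rightarrow> 'a \<Rightarrow> real"
    and phi :: "nat \<Rightarrow> nat \<Rightarrow> 'a \<Rightarrow> real"
  assumes "prob_space M"
    and "0 < b" and "b \<noteq> 1"
    and "even L" and "L \<ge> 2"
    and "P \<ge> 0" and "0 \<le> pB" and "pB \<le> 1"
    and "\<epsilon> > 0"
    and indep: "prob_space.indep_vars M (\<lambda>_. borel)
          (\<lambda>i. case i of Beta l \<Rightarrow> beta l | Theta l \<Rightarrow> theta l | Phi l k \<Rightarrow> phi l k)
          (Beta ` {1..L} \<union> Theta ` {1..L} \<union> {Phi l k | l k. l \<in> {1..L} \<and> k \<ge> 1})"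
    and beta0: "\<And>l. l \<in> {1..L} \<Longrightarrow> measure M {x \<in> space M. beta l x = 0} = pB"
    and beta1: "\<And>l. l \<in> {1..L} \<Longrightarrow> measure M {x \<in> space M. beta l x = 1} = 1 - pB"
    and theta_unif: "\<And>l. l \<in> {1..L} \<Longrightarrow> distr M borel (theta l) = unif2pi"
    and phi_unif: "\<And>l k. l \<in> {1..L} \<Longrightarrow> k \<ge> 1 \<Longrightarrow> distr M borel (phi l k) = unif2pi"
  shows "(\<lambda>K. measure M {x \<in> space M.
            \<bar>(1 / real K) * (\<Sum>k=1..K. log b (1 + ((cmod (h1 L beta theta phi k x))\<^sup>2
                                            + (cmod (h2 L beta theta phi k x))\<^sup>2) * P))
             - Rbar b L P (nat \<lfloor>\<Sum>l=1..L div 2. beta l x\<rfloor>)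
                          (nat \<lfloor>\<Sum>l=L div 2 + 1..L. beta l x\<rfloor>)\<bar> \<ge> \<epsilon>})
         \<longlonglongrightarrow> 0"
proof -
  interpret prob_space M by fact
  define Xc where "Xc = (\<lambda>i. case i of Beta l \<Rightarrow> beta l | Theta l \<Rightarrow> theta l | Phi l k \<Rightarrow> phi l k)"
  define J where "J = Beta ` {1..L} \<union> Theta ` {1..L} \<union> {Phi l k | l k. l \<in> {1..L} \<and> k \<ge> 1}"
  have ind: "indep_vars (\<lambda>_. borel) Xc J" using indep unfolding Xc_def J_def .
  have rvJ: "\<And>i. i \<in> J \<Longrightarrow> Xc i \<in> borel_measurable M" using ind by (simp add: indep_vars_def)
  have mb: "beta l \<in> borel_measurable M" if "l \<in> {1..L}" for l
  proof -
    have "Beta l \<in> J" using that unfolding J_def by blast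
    then show ?thesis using rvJ[of "Beta l"] by (simp add: Xc_def)
  qed
  have mt: "theta l \<in> borel_measurable M" if "l \<in> {1..L}" for l
  proof -
    have "Theta l \<in> J" using that unfolding J_def by blast
    then show ?thesis using rvJ[of "Theta l"] by (simp add: Xc_def)
  qed
  have mp: "phi l k \<in> borel_measurable M" if "l \<in> {1..L}" "k \<ge> 1" for l k
  proof -
    have "Phi l k \<in> J" using that unfolding J_def by blast
    then show ?thesis using rvJ[of "Phi l k"] by (simp add: Xc_def)
  qed
  define Y where "Y k x = Yf b L P (\<lambda>l. beta l x, \<lambda>l. theta l x) (\<lambda>l. phi l k x)" for k x
  define C where "C = 2 * cst b L P"
  have Yb: "\<bar>Y k x\<bar> \<le> C" for k x unfolding Y_def C_def by (rule Yf_bound) fact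
  have C0: "0 \<le> C" using Yb[of 0 undefined] by simp
  have Ym: "Y k \<in> borel_measurable M" if "k \<ge> 1" for k
    unfolding Y_def[abs_def] using that by (intro Yf_meas mb mt mp) auto
  have YYint: "integrable M (\<lambda>x. Y k x * Y m x)" if "k \<ge> 1" "m \<ge> 1" for k m
  proof (rule integrable_const_bound[where B="C * C"])
    show "AE x in M. norm (Y k x * Y m x) \<le> C * C"
      using Yb C0 by (auto simp: abs_mult intro!: mult_mono)
    show "(\<lambda>x. Y k x * Y m x) \<in> borel_measurable M" using Ym that by measurable
  qed
  have cross: "(\<integral>x. Y m x * Y k x \<partial>M) = 0" if km: "k \<ge> 1" "m \<ge> 1" "k \<noteq> m" for k m
  proof -
    define A where "A = Beta ` {1..L} \<union> Theta ` {1..L} \<union> (\<lambda>l. Phi l m) ` {1..L}"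
    define Kk where "Kk = (\<lambda>l. Phi l k) ` {1..L}"
    have AJ: "A \<subseteq> J" using km by (auto simp: A_def J_def)
    have KJ: "Kk \<subseteq> J" using km by (auto simp: Kk_def J_def)
    have AK: "A \<inter> Kk = {}" using km by (auto simp: A_def Kk_def)
    have Kne: "Kk \<noteq> {}" using \<open>L \<ge> 2\<close> by (auto simp: Kk_def)
    have iv: "indep_var (PiM A (\<lambda>_. borel)) (\<lambda>x. \<lambda>i\<in>A. Xc i x) (PiM Kk (\<lambda>_. borel)) (\<lambda>x. \<lambda>i\<in>Kk. Xc i x)"
      by (rule indep_var_restrict[OF ind AK AJ KJ])
    define g where "g p = Yf b L P (\<lambda>l. fst p (Beta l), \<lambda>l. fst p (Theta l)) (\<lambda>l. snd p (Phi l k))"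
      for p :: "(rv_idx \<Rightarrow> real) \<times> (rv_idx \<Rightarrow> real)"
    define hh where "hh t = Yf b L P (\<lambda>l. t (Beta l), \<lambda>l. t (Theta l)) (\<lambda>l. t (Phi l m))"
      for t :: "rv_idx \<Rightarrow> real"
    have cA: "(\<lambda>t. t i) \<in> borel_measurable (PiM A (\<lambda>_. borel))" if "i \<in> A" for i
      using that by (rule measurable_component_singleton)
    have cK: "(\<lambda>t. t i) \<in> borel_measurable (PiM Kk (\<lambda>_. borel))" if "i \<in> Kk" for i
      using that by (rule measurable_component_singleton)
    have gm: "g \<in> borel_measurable (PiM A (\<lambda>_. borel) \<Otimes>\<^sub>M PiM Kk (\<lambda>_. borel))"
      unfolding g_def
    proof (rule Yf_meas)
      fix l :: nat assume l: "l \<in> {1..L}"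
      show "(\<lambda>p. fst p (Beta l)) \<in> borel_measurable (PiM A (\<lambda>_. borel) \<Otimes>\<^sub>M PiM Kk (\<lambda>_. borel))"
        using l by (intro measurable_compose[OF measurable_fst cA]) (auto simp: A_def)
      show "(\<lambda>p. fst p (Theta l)) \<in> borel_measurable (PiM A (\<lambda>_. borel) \<Otimes>\<^sub>M PiM Kk (\<lambda>_. borel))"
        using l by (intro measurable_compose[OF measurable_fst cA]) (auto simp: A_def)
      show "(\<lambda>p. snd p (Phi l k)) \<in> borel_measurable (PiM A (\<lambda>_. borel) \<Otimes>\<^sub>M PiM Kk (\<lambda>_. borel))"
        using l by (intro measurable_compose[OF measurable_snd cK]) (auto simp: Kk_def)
    qed
    have hm: "hh \<in> borel_measurable (PiM A (\<lambda>_. borel))"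
      unfolding hh_def by (rule Yf_meas; rule cA) (auto simp: A_def)
    have z: "(\<integral>v. g (t, v) \<partial>distr M (PiM Kk (\<lambda>_. borel)) (\<lambda>x. \<lambda>i\<in>Kk. Xc i x)) = 0" for t
    proof -
      have "distr M (PiM Kk (\<lambda>_. borel)) (\<lambda>x. \<lambda>i\<in>Kk. Xc i x) = PiM Kk (\<lambda>_. unif2pi)"
        using km by (intro distr_Phi[OF ind KJ Kne]) (auto simp: Kk_def Xc_def intro!: phi_unif)
      then show ?thesis unfolding g_def fst_conv snd_conv Kk_def
        using mean_zero_Phi[OF \<open>P \<ge> 0\<close>] by simp
    qed
    have "(\<integral>x. hh (\<lambda>i\<in>A. Xc i x) * g ((\<lambda>i\<in>A. Xc i x), (\<lambda>i\<in>Kk. Xc i x)) \<partial>M) = 0"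
      by (rule orth[OF iv gm hm _ _ z]) (auto simp: g_def hh_def intro: Yf_bound[OF \<open>P \<ge> 0\<close>])
    moreover have "hh (\<lambda>i\<in>A. Xc i x) = Y m x" for x
      unfolding hh_def Y_def by (rule Yf_cong) (auto simp: A_def Xc_def)
    moreover have "g ((\<lambda>i\<in>A. Xc i x), (\<lambda>i\<in>Kk. Xc i x)) = Y k x" for x
      unfolding g_def Y_def fst_conv snd_conv by (rule Yf_cong) (auto simp: A_def Kk_def Xc_def)
    ultimately show ?thesis by simp
  qed
  have sq: "(\<integral>x. (\<Sum>k=1..K. Y k x)\<^sup>2 \<partial>M) \<le> real K * C\<^sup>2" for K
  proof -
    have "(\<integral>x. (\<Sum>k=1..K. Y k x)\<^sup>2 \<partial>M) = (\<integral>x. (\<Sum>k=1..K. \<Sum>m=1..K. Y k x * Y m x) \<partial>M)"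
      by (simp add: power2_eq_square sum_product)
    also have "\<dots> = (\<Sum>k=1..K. \<Sum>m=1..K. (\<integral>x. Y k x * Y m x \<partial>M))"
    proof -
      have "(\<integral>x. (\<Sum>k=1..K. \<Sum>m=1..K. Y k x * Y m x) \<partial>M) = (\<Sum>k=1..K. (\<integral>x. (\<Sum>m=1..K. Y k x * Y m x) \<partial>M))"
        by (rule Bochner_Integration.integral_sum) (auto intro!: Bochner_Integration.integrable_sum YYint)
      also have "\<dots> = (\<Sum>k=1..K. \<Sum>m=1..K. (\<integral>x. Y k x * Y m x \<partial>M))"
        by (intro sum.cong refl Bochner_Integration.integral_sum) (auto intro!: YYint)
      finally show ?thesis .
    qed
    also have "\<dots> = (\<Sum>k=1..K. (\<integral>x. Y k x * Y k x \<partial>M))"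
    proof (rule sum.cong[OF refl])
      fix k assume k: "k \<in> {1..K}"
      have "(\<Sum>m=1..K. (\<integral>x. Y k x * Y m x \<partial>M)) = (\<Sum>m=1..K. if m = k then (\<integral>x. Y k x * Y k x \<partial>M) else 0)"
        using k cross by (intro sum.cong refl) auto
      also have "\<dots> = (\<integral>x. Y k x * Y k x \<partial>M)" using k by simp
      finally show "(\<Sum>m=1..K. (\<integral>x. Y k x * Y m x \<partial>M)) = (\<integral>x. Y k x * Y k x \<partial>M)" .
    qed
    also have "\<dots> \<le> (\<Sum>k=1..K. C\<^sup>2)"
    proof (rule sum_mono)
      fix k assume k: "k \<in> {1..K}"
      have "(\<integral>x. Y k x * Y k x \<partial>M) \<le> C\<^sup>2"
      proof (rule integral_le_const)
        show "integrable M (\<lambda>x. Y k x * Y k x)" using k YYint by auto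
        show "AE x in M. Y k x * Y k x \<le> C\<^sup>2"
        proof (intro AE_I2)
          fix x
          have "Y k x * Y k x = \<bar>Y k x\<bar> * \<bar>Y k x\<bar>" by (simp add: abs_mult[symmetric])
          also have "\<dots> \<le> C * C" using Yb C0 by (intro mult_mono) auto
          finally show "Y k x * Y k x \<le> C\<^sup>2" by (simp add: power2_eq_square)
        qed
      qed
      then show "(\<integral>x. Y k x * Y k x \<partial>M) \<le> C\<^sup>2" .
    qed
    finally show ?thesis by simp
  qed
  define S where "S K x = (\<Sum>k=1..K. Y k x) / real K" for K x
  have Sm: "S K \<in> borel_measurable M" for K
    unfolding S_def[abs_def] using Ym by (intro borel_measurable_divide borel_measurable_sum) auto
  have markov: "measure M {x\<in>space M. (S K x)\<^sup>2 \<ge> \<epsilon>\<^sup>2} \<le> C\<^sup>2 / (\<epsilon>\<^sup>2 * real K)" if K: "K \<ge> 1" for K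
  proof -
    have int: "integrable M (\<lambda>x. (S K x)\<^sup>2)"
    proof (rule integrable_const_bound[where B="C\<^sup>2"])
      show "AE x in M. norm ((S K x)\<^sup>2) \<le> C\<^sup>2"
      proof (intro AE_I2)
        fix x
        have "\<bar>\<Sum>k=1..K. Y k x\<bar> \<le> (\<Sum>k=1..K. \<bar>Y k x\<bar>)" by (rule sum_abs)
        also have "\<dots> \<le> (\<Sum>k=1..K. C)" using Yb by (intro sum_mono) auto
        finally have "\<bar>\<Sum>k=1..K. Y k x\<bar> \<le> real K * C" by simp
        then have "\<bar>S K x\<bar> \<le> C" using K by (simp add: S_def abs_divide field_simps)
        then have "\<bar>S K x\<bar>\<^sup>2 \<le> C\<^sup>2" by (intro power_mono) auto
        then show "norm ((S K x)\<^sup>2) \<le> C\<^sup>2" by simp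
      qed
      show "(\<lambda>x. (S K x)\<^sup>2) \<in> borel_measurable M" using Sm by measurable
    qed
    have "measure M {x\<in>space M. (S K x)\<^sup>2 \<ge> \<epsilon>\<^sup>2} \<le> (\<integral>x. (S K x)\<^sup>2 \<partial>M) / \<epsilon>\<^sup>2"
      by (rule integral_Markov_inequality_measure[OF int, where A="space M"]) (use \<open>\<epsilon> > 0\<close> in auto)
    also have "(\<integral>x. (S K x)\<^sup>2 \<partial>M) = (\<integral>x. (\<Sum>k=1..K. Y k x)\<^sup>2 \<partial>M) / (real K)\<^sup>2"
      by (simp add: S_def power_divide)
    also have "\<dots> \<le> real K * C\<^sup>2 / (real K)\<^sup>2" by (intro divide_right_mono sq) auto
    also have "\<dots> = C\<^sup>2 / real K" using K by (simp add: power2_eq_square)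
    finally show ?thesis using \<open>\<epsilon> > 0\<close> by (simp add: field_simps)
  qed
  define Nl where "Nl l = {x\<in>space M. beta l x \<noteq> 0 \<and> beta l x \<noteq> 1}" for l
  have Nl_sets: "Nl l \<in> sets M" if "l \<in> {1..L}" for l
  proof -
    have "Nl l = beta l -` (UNIV - {0,1}) \<inter> space M" by (auto simp: Nl_def)
    moreover have "(UNIV - {0,1}) \<in> sets (borel :: real measure)"
      by (intro borel_open open_Diff) auto
    ultimately show ?thesis using measurable_sets[OF mb[OF that]] by simp
  qed
  have Nl0: "measure M (Nl l) = 0" if l: "l \<in> {1..L}" for l
  proof -
    have s0: "{x\<in>space M. beta l x = 0} \<in> sets M" and s1: "{x\<in>space M. beta l x = 1} \<in> sets M"
      using measurable_sets[OF mb[OF l], of "{0}"] measurable_sets[OF mb[OF l], of "{1}"]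
      by (auto simp: vimage_def Int_def conj_commute)
    have "Nl l = space M - ({x\<in>space M. beta l x = 0} \<union> {x\<in>space M. beta l x = 1})"
      by (auto simp: Nl_def)
    also have "measure M \<dots> = 1 - measure M ({x\<in>space M. beta l x = 0} \<union> {x\<in>space M. beta l x = 1})"
      using s0 s1 by (intro prob_compl) auto
    also have "measure M ({x\<in>space M. beta l x = 0} \<union> {x\<in>space M. beta l x = 1}) = pB + (1 - pB)"
      using s0 s1 beta0[OF l] beta1[OF l] by (subst finite_measure_Union) auto
    finally show ?thesis by simp
  qed
  define N where "N = (\<Union>l\<in>{1..L}. Nl l)"
  have N_sets: "N \<in> sets M" unfolding N_def using Nl_sets by auto
  have N0: "measure M N = 0"
  proof -
    have "measure M N \<le> (\<Sum>l\<in>{1..L}. measure M (Nl l))"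
      unfolding N_def using Nl_sets by (intro finite_measure_subadditive_finite) auto
    also have "\<dots> = 0" using Nl0 by simp
    finally show ?thesis using measure_nonneg[of M N] by linarith
  qed
  define E where "E K = {x \<in> space M.
            \<bar>(1 / real K) * (\<Sum>k=1..K. log b (1 + ((cmod (h1 L beta theta phi k x))\<^sup>2
                                            + (cmod (h2 L beta theta phi k x))\<^sup>2) * P))
             - Rbar b L P (nat \<lfloor>\<Sum>l=1..L div 2. beta l x\<rfloor>)
                          (nat \<lfloor>\<Sum>l=L div 2 + 1..L. beta l x\<rfloor>)\<bar> \<ge> \<epsilon>}" for K
  define B where "B K = {x\<in>space M. (S K x)\<^sup>2 \<ge> \<epsilon>\<^sup>2}" for K
  have B_sets: "B K \<in> sets M" for K unfolding B_def using Sm[of K] by measurable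
  have incl: "E K \<subseteq> B K \<union> N" if K: "K \<ge> 1" for K
  proof
    fix x assume xE: "x \<in> E K"
    show "x \<in> B K \<union> N"
    proof (cases "x \<in> N")
      case False
      then have b01: "bc (beta l x) = beta l x" if "l \<in> {1..L}" for l
        using xE that by (auto simp: N_def Nl_def E_def bc_def)
      have sb: "(\<Sum>l\<in>S. beta l x) = (\<Sum>l\<in>S. bc (beta l x))" if "S \<subseteq> {1..L}" for S
        using b01 that by (intro sum.cong) auto
      have R: "Rbar b L P (nat \<lfloor>\<Sum>l=1..L div 2. beta l x\<rfloor>) (nat \<lfloor>\<Sum>l=L div 2 + 1..L. beta l x\<rfloor>)
              = Rf b L P (\<lambda>l. beta l x)"
        unfolding Rf_def by (subst (1 2) sb) auto
      have hs: "(\<Sum>l\<in>S. complex_of_real (beta l x) * cis (theta l x + phi l k x))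
             = (\<Sum>l\<in>S. complex_of_real (bc (beta l x)) * cis (theta l x + phi l k x))" if "S \<subseteq> {1..L}" for S k
        using b01 that by (intro sum.cong) auto
      have Z: "log b (1 + ((cmod (h1 L beta theta phi k x))\<^sup>2 + (cmod (h2 L beta theta phi k x))\<^sup>2) * P)
             = Y k x + Rf b L P (\<lambda>l. beta l x)" for k
        unfolding Y_def Yf_def Zf_def h1_def h2_def fst_conv snd_conv by (subst (1 2) hs) auto
      have "(1 / real K) * (\<Sum>k=1..K. log b (1 + ((cmod (h1 L beta theta phi k x))\<^sup>2
                                            + (cmod (h2 L beta theta phi k x))\<^sup>2) * P))
             - Rbar b L P (nat \<lfloor>\<Sum>l=1..L div 2. beta l x\<rfloor>) (nat \<lfloor>\<Sum>l=L div 2 + 1..L. beta l x\<rfloor>)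
            = S K x"
        unfolding Z R S_def using K by (simp add: sum.distrib field_simps)
      then have "\<epsilon> \<le> \<bar>S K x\<bar>" using xE by (simp add: E_def)
      then have "\<epsilon>\<^sup>2 \<le> \<bar>S K x\<bar>\<^sup>2" using \<open>\<epsilon> > 0\<close> by (intro power_mono) auto
      then show ?thesis using xE by (simp add: B_def E_def)
    qed simp
  qed
  have bound: "measure M (E K) \<le> C\<^sup>2 / (\<epsilon>\<^sup>2 * real K)" if K: "K \<ge> 1" for K
  proof -
    have "measure M (E K) \<le> measure M (B K \<union> N)"
      by (rule finite_measure_mono[OF incl[OF K]]) (use B_sets N_sets in auto)
    also have "\<dots> \<le> measure M (B K) + measure M N"
      using B_sets N_sets by (intro measure_subadditive) auto
    also have "\<dots> \<le> C\<^sup>2 / (\<epsilon>\<^sup>2 * real K)" using markov[OF K] N0 by (simp add: B_def)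
    finally show ?thesis .
  qed
  have lim: "(\<lambda>K. (C\<^sup>2 / \<epsilon>\<^sup>2) / real K) \<longlonglongrightarrow> 0" by (rule lim_const_over_n)
  show ?thesis
    unfolding E_def[symmetric]
  proof (rule tendsto_sandwich[OF _ _ tendsto_const lim])
    show "\<forall>\<^sub>F n in sequentially. 0 \<le> measure M (E n)" by simp
    show "\<forall>\<^sub>F n in sequentially. measure M (E n) \<le> C\<^sup>2 / \<epsilon>\<^sup>2 / real n"
      using eventually_ge_at_top[of 1] by eventually_elim (use bound in auto)
  qed
qed

end
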